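(* Let $(\Omega,\mathcal F)$ be a measurable space with $\Sigma\neq\emptyset$, and let $v:\mathcal F\to\mathbb R$ be a non-decreasing and continuous set function with $v(\emptyset)=0$. Then the following are equivalent. (a) $v$ is supermodular: $v(A)+v(B)\le v(A\cup B)+v(A\cap B)$ for all $A,B\in\mathcal F$. (b) For every $\mathcal I\in\Sigma$, $\mu_{v,\mathcal I}\in\mathcal C_{+,v}(\Omega)$, where $\mathcal C_{+,v}(\Omega)=\{\mu\in\mathcal M(\Omega)\mid\mu(\Omega)=v(\Omega),\ \mu(B)\ge v(B)\ \forall B\in\mathcal F\}$. (c) $v(A)=\inf_{\mathcal I\in\Sigma}\mu_{v,\mathcal I}(A)$ for all $A\in\mathcal F$. (d) For all $A,B\in\mathcal F$ with $B\subset A$, $v(B)=\inf_{\mu\in\mathcal C_{+,v}(A)}\mu(B)$, where $\mathcal C_{+,v}(A)=\{\mu\in\mathcal M(A)\mid \mu(A)=v(A),\ \mu(B')\ge v(B')\ \forall B'\in\mathcal F,\ B'\subset A\}$.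
   Context: $\Sigma$ denotes the set of all classes $\mathcal I\subset\mathcal F$ that are chains (totally ordered by inclusion), contain $\emptyset$ and $\Omega$, and generate $\mathcal F$ as a $\sigma$-algebra. $\mathcal M(A)$ is the set of finite measures on $(A,\mathcal F|_A)$. $v$ is non-decreasing if $v(A)\le v(B)$ for $A\subset B$. For $\mathcal I\in\Sigma$ let $\mathcal J$ be the algebra generated by $\mathcal I$, whose elements are the sets $\bigcup_{i=1}^n (C_i\cap D_i^c)$ with $C_1\supset D_1\supset\cdots\supset C_n\supset D_n$ in $\mathcal I$; define $\mu_{v,\mathcal I}(\bigcup_{i=1}^n (C_i\cap D_i^c))=\sum_{i=1}^n(v(C_i)-v(D_i))$. $v$ is continuous if for every $\mathcal I\in\Sigma$ this $\mu_{v,\mathcal I}$ is $\sigma$-additive on $\mathcal J$; it then extends uniquely to a measure on $\mathcal F$, again denoted $\mu_{v,\mathcal I}$ (the extremal measure). *)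

theory Defs
  imports "HOL-Analysis.Analysis"
begin

definition chains_Sigma :: "'a measure \<Rightarrow> 'a set set set" where
  "chains_Sigma M = {I. I \<subseteq> sets M \<and> (\<forall>C\<in>I. \<forall>D\<in>I. C \<subseteq> D \<or> D \<subseteq> C)
      \<and> {} \<in> I \<and> space M \<in> I \<and> sigma_sets (space M) I = sets M}"

definition chain_rep :: "'a set set \<Rightarrow> nat \<Rightarrow> (nat \<Rightarrow> 'a set) \<Rightarrow> (nat \<Rightarrow> 'a set) \<Rightarrow> bool" where
  "chain_rep I n C D \<longleftrightarrow> (\<forall>i<n. C i \<in> I \<and> D i \<in> I \<and> D i \<subseteq> C i)
      \<and> (\<forall>i. Suc i < n \<longrightarrow> C (Suc i) \<subseteq> D i)"

definition gen_alg :: "'a measure \<Rightarrow> 'a set set \<Rightarrow> 'a set set" where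
  "gen_alg M I = {A. \<exists>n C D. chain_rep I n C D \<and> A = (\<Union>i<n. C i \<inter> (space M - D i))}"

definition mu_alg :: "'a measure \<Rightarrow> ('a set \<Rightarrow> real) \<Rightarrow> 'a set set \<Rightarrow> 'a set \<Rightarrow> real" where
  "mu_alg M v I A = (THE x. \<exists>n C D. chain_rep I n C D \<and> A = (\<Union>i<n. C i \<inter> (space M - D i))
       \<and> x = (\<Sum>i<n. v (C i) - v (D i)))"

definition nondecreasing_sf :: "'a measure \<Rightarrow> ('a set \<Rightarrow> real) \<Rightarrow> bool" where
  "nondecreasing_sf M v \<longleftrightarrow> (\<forall>A\<in>sets M. \<forall>B\<in>sets M. A \<subseteq> B \<longrightarrow> v A \<le> v B)"

definition continuous_sf :: "'a measure \<Rightarrow> ('a set \<Rightarrow> real) \<Rightarrow> bool" where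
  "continuous_sf M v \<longleftrightarrow> (\<forall>I\<in>chains_Sigma M. \<forall>F :: nat \<Rightarrow> 'a set.
      range F \<subseteq> gen_alg M I \<longrightarrow> disjoint_family F \<longrightarrow> (\<Union>n. F n) \<in> gen_alg M I \<longrightarrow>
      (\<lambda>n. mu_alg M v I (F n)) sums mu_alg M v I (\<Union>n. F n))"

definition extremal_measure :: "'a measure \<Rightarrow> ('a set \<Rightarrow> real) \<Rightarrow> 'a set set \<Rightarrow> 'a measure" where
  "extremal_measure M v I = (THE N. sets N = sets M \<and> finite_measure N
      \<and> (\<forall>A\<in>gen_alg M I. measure N A = mu_alg M v I A))"

definition supermodular_sf :: "'a measure \<Rightarrow> ('a set \<Rightarrow> real) \<Rightarrow> bool" where
  "supermodular_sf M v \<longleftrightarrow> (\<forall>A\<in>sets M. \<forall>B\<in>sets M. v A + v B \<le> v (A \<union> B) + v (A \<inter> B))"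

definition core_plus :: "'a measure \<Rightarrow> ('a set \<Rightarrow> real) \<Rightarrow> 'a set \<Rightarrow> 'a measure set" where
  "core_plus M v A = {N. sets N = sets (restrict_space M A) \<and> finite_measure N
      \<and> measure N A = v A \<and> (\<forall>B\<in>sets M. B \<subseteq> A \<longrightarrow> measure N B \<ge> v B)}"

end

theory Submission
  imports Defs
begin

definition rset :: "'a set \<Rightarrow> nat \<Rightarrow> (nat \<Rightarrow> 'a set) \<Rightarrow> (nat \<Rightarrow> 'a set) \<Rightarrow> 'a set" where
  "rset \<Omega> n C D = (\<Union>i<n. C i \<inter> (\<Omega> - D i))"
definition rsum :: "('a set \<Rightarrow> real) \<Rightarrow> nat \<Rightarrow> (nat \<Rightarrow> 'a set) \<Rightarrow> (nat \<Rightarrow> 'a set) \<Rightarrow> real" where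
  "rsum v n C D = (\<Sum>i<n. v (C i) - v (D i))"
definition ischain :: "'a set set \<Rightarrow> bool" where
  "ischain I \<longleftrightarrow> (\<forall>C\<in>I. \<forall>D\<in>I. C \<subseteq> D \<or> D \<subseteq> C)"

lemma ischain_Int: "ischain I \<Longrightarrow> C \<in> I \<Longrightarrow> E \<in> I \<Longrightarrow> C \<inter> E \<in> I"
  unfolding ischain_def by (metis Int_absorb1 Int_absorb2)
lemma ischain_Un: "ischain I \<Longrightarrow> C \<in> I \<Longrightarrow> E \<in> I \<Longrightarrow> C \<union> E \<in> I"
  unfolding ischain_def by (metis Un_absorb1 Un_absorb2)

lemma chain_rep_mono:
  assumes "chain_rep I n C D" "i < j" "j < n" shows "C j \<subseteq> D i"
  using assms(2,3)
proof (induction j)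
  case 0 then show ?case by simp
next
  case (Suc j)
  show ?case
  proof (cases "i = j")
    case True then show ?thesis using assms(1) Suc by (auto simp: chain_rep_def)
  next
    case False
    then have "C j \<subseteq> D i" using Suc by auto
    moreover have "D j \<subseteq> C j" "C (Suc j) \<subseteq> D j" using assms(1) Suc by (auto simp: chain_rep_def)
    ultimately show ?thesis by blast
  qed
qed

lemma rep_empty:
  assumes "chain_rep I n C D" "I \<subseteq> Pow \<Omega>" "rset \<Omega> n C D = {}"
  shows "rsum v n C D = 0"
proof -
  have "C i = D i" if "i < n" for i
  proof -
    have "C i \<inter> (\<Omega> - D i) = {}" using assms(3) that unfolding rset_def by auto
    moreover have "C i \<subseteq> \<Omega>" "D i \<subseteq> C i" using assms(1,2) that by (auto simp: chain_rep_def)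
    ultimately show ?thesis by blast
  qed
  then show ?thesis unfolding rsum_def by simp
qed

lemma rep_split:
  assumes "chain_rep I n C D" "I \<subseteq> Pow \<Omega>" "ischain I" "E \<in> I"
  shows "chain_rep I n (\<lambda>i. C i \<inter> E) (\<lambda>i. D i \<inter> E)"
    "chain_rep I n (\<lambda>i. C i \<union> E) (\<lambda>i. D i \<union> E)"
    "rset \<Omega> n (\<lambda>i. C i \<inter> E) (\<lambda>i. D i \<inter> E) = rset \<Omega> n C D \<inter> E"
    "rset \<Omega> n (\<lambda>i. C i \<union> E) (\<lambda>i. D i \<union> E) = rset \<Omega> n C D - E"
    "rsum v n C D = rsum v n (\<lambda>i. C i \<inter> E) (\<lambda>i. D i \<inter> E) + rsum v n (\<lambda>i. C i \<union> E) (\<lambda>i. D i \<union> E)"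
proof -
  show "chain_rep I n (\<lambda>i. C i \<inter> E) (\<lambda>i. D i \<inter> E)"
    using assms ischain_Int unfolding chain_rep_def by blast
  show "chain_rep I n (\<lambda>i. C i \<union> E) (\<lambda>i. D i \<union> E)"
    using assms ischain_Un unfolding chain_rep_def by blast
  show "rset \<Omega> n (\<lambda>i. C i \<inter> E) (\<lambda>i. D i \<inter> E) = rset \<Omega> n C D \<inter> E"
    unfolding rset_def by blast
  have "E \<subseteq> \<Omega>" using assms by auto
  then show "rset \<Omega> n (\<lambda>i. C i \<union> E) (\<lambda>i. D i \<union> E) = rset \<Omega> n C D - E"
    unfolding rset_def by blast
  have "v (C i) - v (D i) = (v (C i \<inter> E) - v (D i \<inter> E)) + (v (C i \<union> E) - v (D i \<union> E))"
    if "i < n" for i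
  proof -
    have "C i \<in> I" "D i \<in> I" "D i \<subseteq> C i" using assms(1) that by (auto simp: chain_rep_def)
    then have "(C i \<subseteq> E \<or> E \<subseteq> C i) \<and> (D i \<subseteq> E \<or> E \<subseteq> D i)" using assms(3,4) unfolding ischain_def by blast
    then show ?thesis using \<open>D i \<subseteq> C i\<close>
      by (auto simp: Int_absorb1 Int_absorb2 Un_absorb1 Un_absorb2)
  qed
  then show "rsum v n C D = rsum v n (\<lambda>i. C i \<inter> E) (\<lambda>i. D i \<inter> E) + rsum v n (\<lambda>i. C i \<union> E) (\<lambda>i. D i \<union> E)"
    unfolding rsum_def by (simp add: sum.distrib[symmetric])
qed

lemma chain_rep_shift:
  assumes "chain_rep I (Suc n) C D" shows "chain_rep I n (\<lambda>i. C (Suc i)) (\<lambda>i. D (Suc i))"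
  using assms unfolding chain_rep_def by auto

lemma rep_tele:
  assumes "chain_rep I m C D" "I \<subseteq> Pow \<Omega>" "X \<subseteq> \<Omega>" "Y \<subseteq> X"
    "\<And>i. i < m \<Longrightarrow> Y \<subseteq> D i \<and> C i \<subseteq> X"
    "rset \<Omega> m C D = X - Y"
  shows "rsum v m C D = v X - v Y"
  using assms
proof (induction m arbitrary: C D X)
  case 0
  then have "X = Y" by (auto simp: rset_def)
  then show ?case by (simp add: rsum_def)
next
  case (Suc k)
  note cr = Suc.prems(1)
  have sub: "C j \<subseteq> D 0" if "j < Suc k" "0 < j" for j using chain_rep_mono[OF cr that(2,1)] .
  have D0C0: "D 0 \<subseteq> C 0" "C 0 \<subseteq> \<Omega>" using cr Suc.prems(2) by (auto simp: chain_rep_def)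
  have piece: "C i \<inter> (\<Omega> - D i) \<subseteq> C 0" if "i < Suc k" for i
    using sub[of i] that D0C0 by (cases "i = 0") auto
  have YD: "Y \<subseteq> D 0" "C 0 \<subseteq> X" using Suc.prems(5)[of 0] by auto
  have "X \<subseteq> C 0"
  proof
    fix x assume "x \<in> X"
    show "x \<in> C 0"
    proof (cases "x \<in> Y")
      case True then show ?thesis using YD D0C0 by blast
    next
      case False
      then have "x \<in> rset \<Omega> (Suc k) C D" using Suc.prems(6) \<open>x \<in> X\<close> by auto
      then show ?thesis using piece unfolding rset_def by blast
    qed
  qed
  then have X: "C 0 = X" using YD by blast
  have split: "rset \<Omega> (Suc k) C D = (C 0 \<inter> (\<Omega> - D 0)) \<union> rset \<Omega> k (\<lambda>i. C (Suc i)) (\<lambda>i. D (Suc i))"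
    unfolding rset_def by (simp add: lessThan_Suc_eq_insert_0 image_Suc_lessThan[symmetric] UN_insert)
  have restsub: "rset \<Omega> k (\<lambda>i. C (Suc i)) (\<lambda>i. D (Suc i)) \<subseteq> D 0"
    unfolding rset_def proof (rule UN_least)
    fix i assume "i \<in> {..<k}" then show "C (Suc i) \<inter> (\<Omega> - D (Suc i)) \<subseteq> D 0" using sub[of "Suc i"] by auto
  qed
  have rest: "rset \<Omega> k (\<lambda>i. C (Suc i)) (\<lambda>i. D (Suc i)) = D 0 - Y"
    using split restsub Suc.prems(6) X YD D0C0 by blast
  have "rsum v k (\<lambda>i. C (Suc i)) (\<lambda>i. D (Suc i)) = v (D 0) - v Y"
    apply (rule Suc.IH[OF chain_rep_shift[OF cr] Suc.prems(2) _ YD(1) _ rest])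
    using D0C0 Suc.prems(5) sub by (auto simp del: lessThan_iff)
  moreover have "rsum v (Suc k) C D = (v (C 0) - v (D 0)) + rsum v k (\<lambda>i. C (Suc i)) (\<lambda>i. D (Suc i))"
    unfolding rsum_def by (simp only: sum.lessThan_Suc_shift)
  ultimately show ?case using X by simp
qed

lemma rep_single:
  assumes "chain_rep I m C D" "I \<subseteq> Pow \<Omega>" "ischain I" "X \<in> I" "Y \<in> I" "Y \<subseteq> X"
    "rset \<Omega> m C D = X \<inter> (\<Omega> - Y)"
  shows "rsum v m C D = v X - v Y"
proof -
  note s1 = rep_split[OF assms(1-3) assms(4)]
  have a: "rsum v m (\<lambda>i. C i \<union> X) (\<lambda>i. D i \<union> X) = 0"
    by (rule rep_empty[OF s1(2) assms(2)]) (simp add: s1(4) assms(7))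
  let ?C = "\<lambda>i. C i \<inter> X" and ?D = "\<lambda>i. D i \<inter> X"
  note s2 = rep_split[OF s1(1) assms(2,3) assms(5)]
  have b: "rsum v m (\<lambda>i. ?C i \<inter> Y) (\<lambda>i. ?D i \<inter> Y) = 0"
    by (rule rep_empty[OF s2(1) assms(2)]) (simp add: s2(3) s1(3) assms(7), blast)
  have XO: "X \<subseteq> \<Omega>" using assms by auto
  have c: "rsum v m (\<lambda>i. ?C i \<union> Y) (\<lambda>i. ?D i \<union> Y) = v X - v Y"
  proof (rule rep_tele[OF s2(2) assms(2) XO assms(6)])
    show "rset \<Omega> m (\<lambda>i. C i \<inter> X \<union> Y) (\<lambda>i. D i \<inter> X \<union> Y) = X - Y"
      using s2(4) s1(3) assms(7) XO by auto
    fix i assume "i < m"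
    then have "D i \<subseteq> C i" using assms(1) by (auto simp: chain_rep_def)
    then show "Y \<subseteq> D i \<inter> X \<union> Y \<and> C i \<inter> X \<union> Y \<subseteq> X" using assms(6) by auto
  qed
  show ?thesis using s1(5) s2(5) a b c by simp
qed

lemma rep_unique:
  assumes "chain_rep I n C D" "chain_rep I m C' D'" "I \<subseteq> Pow \<Omega>" "ischain I"
    "rset \<Omega> n C D = rset \<Omega> m C' D'"
  shows "rsum v n C D = rsum v m C' D'"
  using assms
proof (induction n arbitrary: C D m C' D')
  case 0
  then have "rset \<Omega> m C' D' = {}" by (simp add: rset_def)
  then show ?case using rep_empty[OF "0.prems"(2,3)] by (simp add: rsum_def)
next
  case (Suc k)
  note cr = Suc.prems(1)
  let ?E = "D 0"
  have E: "?E \<in> I" "D 0 \<subseteq> C 0" "C 0 \<in> I" using cr by (auto simp: chain_rep_def)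
  have sub: "C j \<subseteq> D 0" if "j < Suc k" "0 < j" for j using chain_rep_mono[OF cr that(2,1)] .
  have split: "rset \<Omega> (Suc k) C D = (C 0 \<inter> (\<Omega> - D 0)) \<union> rset \<Omega> k (\<lambda>i. C (Suc i)) (\<lambda>i. D (Suc i))"
    unfolding rset_def by (simp add: lessThan_Suc_eq_insert_0 image_Suc_lessThan[symmetric] UN_insert)
  have restsub: "rset \<Omega> k (\<lambda>i. C (Suc i)) (\<lambda>i. D (Suc i)) \<subseteq> D 0"
    unfolding rset_def proof (rule UN_least)
    fix i assume "i \<in> {..<k}" then show "C (Suc i) \<inter> (\<Omega> - D (Suc i)) \<subseteq> D 0" using sub[of "Suc i"] by auto
  qed
  note s = rep_split[OF Suc.prems(2,3,4) E(1)]
  have r1: "rset \<Omega> m (\<lambda>i. C' i \<inter> ?E) (\<lambda>i. D' i \<inter> ?E) = rset \<Omega> k (\<lambda>i. C (Suc i)) (\<lambda>i. D (Suc i))"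
    using s(3) Suc.prems(5) split restsub by blast
  have r2: "rset \<Omega> m (\<lambda>i. C' i \<union> ?E) (\<lambda>i. D' i \<union> ?E) = C 0 \<inter> (\<Omega> - D 0)"
    using s(4) Suc.prems(5) split restsub by blast
  have "rsum v k (\<lambda>i. C (Suc i)) (\<lambda>i. D (Suc i)) = rsum v m (\<lambda>i. C' i \<inter> ?E) (\<lambda>i. D' i \<inter> ?E)"
    using Suc.IH[OF chain_rep_shift[OF cr] s(1) Suc.prems(3,4) r1[symmetric]] .
  moreover have "rsum v m (\<lambda>i. C' i \<union> ?E) (\<lambda>i. D' i \<union> ?E) = v (C 0) - v (D 0)"
    by (rule rep_single[OF s(2) Suc.prems(3,4) E(3) E(1) E(2) r2])
  moreover have "rsum v (Suc k) C D = (v (C 0) - v (D 0)) + rsum v k (\<lambda>i. C (Suc i)) (\<lambda>i. D (Suc i))"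
    unfolding rsum_def by (simp only: sum.lessThan_Suc_shift)
  ultimately show ?case using s(5) by simp
qed

lemma mu_alg_eq:
  assumes "chain_rep I n C D" "I \<subseteq> Pow (space M)" "ischain I"
  shows "mu_alg M v I (rset (space M) n C D) = rsum v n C D"
  unfolding mu_alg_def
proof (rule the_equality)
  show "\<exists>n' C' D'. chain_rep I n' C' D' \<and> rset (space M) n C D = (\<Union>i<n'. C' i \<inter> (space M - D' i)) \<and> rsum v n C D = (\<Sum>i<n'. v (C' i) - v (D' i))"
    using assms(1) by (auto simp: rset_def rsum_def)
next
  fix x assume "\<exists>n' C' D'. chain_rep I n' C' D' \<and> rset (space M) n C D = (\<Union>i<n'. C' i \<inter> (space M - D' i)) \<and> x = (\<Sum>i<n'. v (C' i) - v (D' i))"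
  then obtain n' C' D' where "chain_rep I n' C' D'" "rset (space M) n C D = rset (space M) n' C' D'" "x = rsum v n' C' D'"
    by (auto simp: rset_def rsum_def)
  then show "x = rsum v n C D" using rep_unique[OF assms(1) _ assms(2,3)] by metis
qed

definition dset :: "'a set \<Rightarrow> 'a set set \<Rightarrow> 'a set set" where
  "dset \<Omega> I = {C \<inter> (\<Omega> - D) | C D. C \<in> I \<and> D \<in> I \<and> D \<subseteq> C}"

lemma dset_semiring:
  assumes "ischain I" "I \<subseteq> Pow \<Omega>" "{} \<in> I"
  shows "semiring_of_sets \<Omega> (dset \<Omega> I)"
proof
  show "dset \<Omega> I \<subseteq> Pow \<Omega>" unfolding dset_def by auto
  show "{} \<in> dset \<Omega> I" unfolding dset_def using assms(3) by blast
next
  fix a b assume "a \<in> dset \<Omega> I" "b \<in> dset \<Omega> I"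
  then obtain C D C' D' where ab: "a = C \<inter> (\<Omega> - D)" "C \<in> I" "D \<in> I" "D \<subseteq> C"
    "b = C' \<inter> (\<Omega> - D')" "C' \<in> I" "D' \<in> I" "D' \<subseteq> C'"
    unfolding dset_def by blast
  have CC: "C \<inter> C' \<in> I" "(D \<union> D') \<inter> (C \<inter> C') \<in> I"
    using ab assms(1) ischain_Int ischain_Un by metis+
  have "a \<inter> b = (C \<inter> C') \<inter> (\<Omega> - (D \<union> D') \<inter> (C \<inter> C'))" using ab by blast
  then show "a \<inter> b \<in> dset \<Omega> I" unfolding dset_def using CC by blast
  let ?P1 = "C \<inter> (\<Omega> - (D \<union> C') \<inter> C)" and ?P2 = "(C \<inter> D') \<inter> (\<Omega> - D \<inter> (C \<inter> D'))"
  have P: "C \<inter> (D \<union> C') \<in> I" "C \<inter> D' \<in> I" "D \<inter> (C \<inter> D') \<in> I"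
    using ab assms(1) ischain_Int ischain_Un by metis+
  have "?P1 \<in> dset \<Omega> I" unfolding dset_def using ab P
    by (smt (verit, ccfv_threshold) Int_commute inf_le1 mem_Collect_eq)
  moreover have "?P2 \<in> dset \<Omega> I" unfolding dset_def using ab P
    by (smt (verit, ccfv_threshold) inf_le2 mem_Collect_eq)
  moreover have "a - b = ?P1 \<union> ?P2" using ab by blast
  moreover have "disjoint {?P1, ?P2}" unfolding disjoint_def using ab by blast
  ultimately show "\<exists>Cs\<subseteq>dset \<Omega> I. finite Cs \<and> disjoint Cs \<and> a - b = \<Union>Cs"
    by (intro exI[of _ "{?P1, ?P2}"]) auto
qed

lemma dset_sigma:
  assumes "I \<subseteq> Pow \<Omega>" "{} \<in> I"
  shows "sigma_sets \<Omega> (dset \<Omega> I) = sigma_sets \<Omega> I"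
proof (rule sigma_sets_eqI)
  interpret sigma_algebra \<Omega> "sigma_sets \<Omega> I" using assms(1) by (rule sigma_algebra_sigma_sets)
  fix a assume "a \<in> dset \<Omega> I"
  then obtain C D where "a = C \<inter> (\<Omega> - D)" "C \<in> I" "D \<in> I" unfolding dset_def by blast
  then show "a \<in> sigma_sets \<Omega> I" by (auto intro!: Int compl_sets)
next
  fix b assume "b \<in> I"
  then have "b = b \<inter> (\<Omega> - {})" using assms by auto
  then show "b \<in> sigma_sets \<Omega> (dset \<Omega> I)" unfolding dset_def using \<open>b \<in> I\<close> assms(2) by blast
qed

lemma cara_real:
  assumes "semiring_of_sets \<Omega> S" "f {} = 0" "\<And>s. s \<in> S \<Longrightarrow> 0 \<le> f s" "\<Omega> \<in> S"
    "\<And>F. range F \<subseteq> S \<Longrightarrow> disjoint_family F \<Longrightarrow> (\<Union>n. F n) \<in> S \<Longrightarrow> (\<lambda>n. f (F n)) sums f (\<Union>n. F n)"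
  shows "\<exists>N. sets N = sigma_sets \<Omega> S \<and> space N = \<Omega> \<and> finite_measure N \<and> (\<forall>s\<in>S. measure N s = f s)"
proof -
  interpret semiring_of_sets \<Omega> S by fact
  have pos: "positive S (\<lambda>s. ennreal (f s))" unfolding positive_def using assms(2) by simp
  have ca: "countably_additive S (\<lambda>s. ennreal (f s))"
    unfolding countably_additive_def
  proof (intro allI impI)
    fix A :: "nat \<Rightarrow> 'a set" assume A: "range A \<subseteq> S" "disjoint_family A" "\<Union> (range A) \<in> S"
    have su: "(\<lambda>n. f (A n)) sums f (\<Union>n. A n)" using assms(5) A by auto
    have nn: "\<And>i. 0 \<le> f (A i)" using A assms(3) by auto
    show "(\<Sum>i. ennreal (f (A i))) = ennreal (f (\<Union> (range A)))"
      using suminf_ennreal2[OF nn sums_summable[OF su]] sums_unique[OF su] by simp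
  qed
  obtain \<mu>' where mu: "\<forall>s\<in>S. \<mu>' s = ennreal (f s)" "measure_space \<Omega> (sigma_sets \<Omega> S) \<mu>'"
    using caratheodory[OF pos ca] by blast
  interpret sa: sigma_algebra \<Omega> "sigma_sets \<Omega> S" using mu(2) by (simp add: measure_space_def)
  define N where "N = measure_of \<Omega> (sigma_sets \<Omega> S) \<mu>'"
  have sN: "sets N = sigma_sets \<Omega> S" and spN: "space N = \<Omega>" unfolding N_def by simp_all
  have em: "emeasure N s = ennreal (f s)" if "s \<in> S" for s
  proof -
    have "emeasure N s = \<mu>' s" unfolding N_def
      apply (rule emeasure_measure_of_sigma)
      using mu(2) that by (auto simp: measure_space_def)
    then show ?thesis using mu(1) that by simp
  qed
  have fin: "finite_measure N" using em[OF assms(4)] spN by (intro finite_measureI) simp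
  show ?thesis
    apply (intro exI[of _ N] conjI sN spN fin ballI)
    using em assms(3) by (simp add: measure_def)
qed

lemma chainsD:
  assumes "I \<in> chains_Sigma M"
  shows "ischain I" "I \<subseteq> sets M" "I \<subseteq> Pow (space M)" "{} \<in> I" "space M \<in> I"
    "sigma_sets (space M) I = sets M"
  using assms sets.sets_into_space unfolding chains_Sigma_def ischain_def by auto

lemma dset_gen:
  assumes "I \<in> chains_Sigma M" "C \<in> I" "D \<in> I" "D \<subseteq> C"
  shows "C \<inter> (space M - D) \<in> gen_alg M I" "mu_alg M v I (C \<inter> (space M - D)) = v C - v D"
proof -
  have cr: "chain_rep I 1 (\<lambda>_. C) (\<lambda>_. D)" using assms unfolding chain_rep_def by auto
  have e: "rset (space M) 1 (\<lambda>_. C) (\<lambda>_. D) = C \<inter> (space M - D)" unfolding rset_def by (simp add: lessThan_Suc)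
  show "C \<inter> (space M - D) \<in> gen_alg M I" unfolding gen_alg_def using cr e[unfolded rset_def] by blast
  have "mu_alg M v I (rset (space M) 1 (\<lambda>_. C) (\<lambda>_. D)) = rsum v 1 (\<lambda>_. C) (\<lambda>_. D)"
    by (rule mu_alg_eq[OF cr chainsD(3,1)[OF assms(1)]])
  then show "mu_alg M v I (C \<inter> (space M - D)) = v C - v D"
    unfolding e by (simp add: rsum_def)
qed

lemma extremal:
  assumes I: "I \<in> chains_Sigma M" and mono: "nondecreasing_sf M v" and cont: "continuous_sf M v"
  shows "sets (extremal_measure M v I) = sets M" "finite_measure (extremal_measure M v I)"
    "\<And>A. A \<in> gen_alg M I \<Longrightarrow> measure (extremal_measure M v I) A = mu_alg M v I A"
proof -
  let ?\<Omega> = "space M"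
  let ?S = "dset ?\<Omega> I"
  note ch = chainsD[OF I]
  have sr: "semiring_of_sets ?\<Omega> ?S" using dset_semiring[OF ch(1,3,4)] .
  have sig: "sigma_sets ?\<Omega> ?S = sets M" using dset_sigma[OF ch(3,4)] ch(6) by simp
  have Sgen: "s \<in> gen_alg M I" and Sval: "0 \<le> mu_alg M v I s" if sS: "s \<in> ?S" for s
  proof -
    obtain C D where cd: "s = C \<inter> (?\<Omega> - D)" "C \<in> I" "D \<in> I" "D \<subseteq> C"
      using sS unfolding dset_def by blast
    show "s \<in> gen_alg M I" unfolding cd(1) by (rule dset_gen(1)[OF I cd(2-4)])
    have CD: "C \<in> sets M" "D \<in> sets M" using cd(2,3) ch(2) by auto
    have mono': "\<forall>A\<in>sets M. \<forall>B\<in>sets M. A \<subseteq> B \<longrightarrow> v A \<le> v B"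
      using mono unfolding nondecreasing_sf_def .
    have "v D \<le> v C" using mono' CD cd(4) by blast
    then show "0 \<le> mu_alg M v I s" unfolding cd(1) dset_gen(2)[OF I cd(2-4)] by simp
  qed
  have e0: "mu_alg M v I {} = 0"
    using mu_alg_eq[OF _ ch(3,1), of 0 "\<lambda>_. {}" "\<lambda>_. {}" v] by (simp add: rset_def rsum_def chain_rep_def)
  have OmS: "?\<Omega> \<in> ?S" unfolding dset_def using ch(4,5) by blast
  obtain N0 where N0: "sets N0 = sigma_sets ?\<Omega> ?S" "space N0 = ?\<Omega>" "finite_measure N0"
    "\<forall>s\<in>?S. measure N0 s = mu_alg M v I s"
  proof (rule exE[OF cara_real[of ?\<Omega> ?S "mu_alg M v I"]])
    show "semiring_of_sets ?\<Omega> ?S" by (rule sr)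
    show "mu_alg M v I {} = 0" by (rule e0)
    show "\<And>s. s \<in> ?S \<Longrightarrow> 0 \<le> mu_alg M v I s" by (rule Sval)
    show "?\<Omega> \<in> ?S" by (rule OmS)
    fix F :: "nat \<Rightarrow> 'a set" assume "range F \<subseteq> ?S" "disjoint_family F" "(\<Union>n. F n) \<in> ?S"
    then show "(\<lambda>n. mu_alg M v I (F n)) sums mu_alg M v I (\<Union>n. F n)"
      using cont I Sgen unfolding continuous_sf_def by blast
  qed auto
  interpret N0: finite_measure N0 by fact
  define P where "P N \<longleftrightarrow> sets N = sets M \<and> finite_measure N \<and> (\<forall>A\<in>gen_alg M I. measure N A = mu_alg M v I A)" for N
  have "P N0"
    unfolding P_def
  proof (intro conjI ballI)
    show "sets N0 = sets M" using N0(1) sig by simp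
    show "finite_measure N0" by fact
    fix A assume "A \<in> gen_alg M I"
    then obtain n C D where cr: "chain_rep I n C D" and A: "A = rset ?\<Omega> n C D"
      unfolding gen_alg_def rset_def by blast
    have inS: "C i \<inter> (?\<Omega> - D i) \<in> ?S" if "i < n" for i
      using cr that unfolding dset_def chain_rep_def by blast
    have "measure N0 A = (\<Sum>i<n. measure N0 (C i \<inter> (?\<Omega> - D i)))"
      unfolding A rset_def
    proof (rule measure_UNION')
      show "finite {..<n}" by simp
      fix i assume "i \<in> {..<n}"
      then show "C i \<inter> (?\<Omega> - D i) \<in> fmeasurable N0"
        using inS N0(1) N0.fmeasurable_eq_sets by auto
    next
      show "pairwise (\<lambda>i j. disjnt (C i \<inter> (?\<Omega> - D i)) (C j \<inter> (?\<Omega> - D j))) {..<n}"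
        unfolding pairwise_def disjnt_def
      proof (intro ballI impI)
        fix i j assume "i \<in> {..<n}" "j \<in> {..<n}" "i \<noteq> j"
        then consider "i < j" "j < n" | "j < i" "i < n" by force
        then show "C i \<inter> (?\<Omega> - D i) \<inter> (C j \<inter> (?\<Omega> - D j)) = {}"
        proof cases
          case 1 then have "C j \<subseteq> D i" by (rule chain_rep_mono[OF cr])
          then show ?thesis by blast
        next
          case 2 then have "C i \<subseteq> D j" by (rule chain_rep_mono[OF cr])
          then show ?thesis by blast
        qed
      qed
    qed
    also have "\<dots> = (\<Sum>i<n. v (C i) - v (D i))"
    proof (rule sum.cong[OF refl])
      fix i assume "i \<in> {..<n}"
      then have "C i \<in> I" "D i \<in> I" "D i \<subseteq> C i" using cr unfolding chain_rep_def by auto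
      then show "measure N0 (C i \<inter> (?\<Omega> - D i)) = v (C i) - v (D i)"
        using N0(4) inS \<open>i \<in> {..<n}\<close> dset_gen(2)[OF I, of "C i" "D i" v] by simp
    qed
    also have "\<dots> = mu_alg M v I A"
      using mu_alg_eq[OF cr ch(3,1)] A by (simp add: rsum_def)
    finally show "measure N0 A = mu_alg M v I A" .
  qed
  have uniq: "N1 = N2" if "P N1" "P N2" for N1 N2
  proof (rule measure_eqI_generator_eq[where E="?S" and \<Omega>="?\<Omega>" and A="\<lambda>_. ?\<Omega>"])
    show "Int_stable ?S" unfolding Int_stable_def using semiring_of_sets.Int[OF sr] by blast
    show "?S \<subseteq> Pow ?\<Omega>" using semiring_of_sets.axioms(1)[OF sr] by (simp add: subset_class_def)
    show "sets N1 = sigma_sets ?\<Omega> ?S" "sets N2 = sigma_sets ?\<Omega> ?S" using that sig unfolding P_def by auto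
    show "range (\<lambda>_. ?\<Omega>) \<subseteq> ?S" "(\<Union>i. ?\<Omega>) = ?\<Omega>" using OmS by auto
    interpret N1: finite_measure N1 using that unfolding P_def by auto
    interpret N2: finite_measure N2 using that unfolding P_def by auto
    show "emeasure N1 ?\<Omega> \<noteq> \<infinity>" for i by (simp add: N1.emeasure_eq_measure)
    fix X assume "X \<in> ?S"
    then show "emeasure N1 X = emeasure N2 X"
      using that Sgen unfolding P_def by (simp add: N1.emeasure_eq_measure N2.emeasure_eq_measure)
  qed
  have "P (extremal_measure M v I)"
    unfolding extremal_measure_def P_def[symmetric]
    by (rule theI[of P N0]) (use \<open>P N0\<close> uniq in auto)
  then show "sets (extremal_measure M v I) = sets M" "finite_measure (extremal_measure M v I)"
    "\<And>A. A \<in> gen_alg M I \<Longrightarrow> measure (extremal_measure M v I) A = mu_alg M v I A"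
    unfolding P_def by auto
qed

lemma chain_ext:
  assumes I0: "I0 \<in> chains_Sigma M" and EF: "E \<in> sets M" "F \<in> sets M" "E \<subseteq> F"
  shows "\<exists>I'\<in>chains_Sigma M. E \<in> I' \<and> F \<in> I' \<and> (\<forall>C\<in>I0. E \<inter> C \<in> I')"
proof -
  let ?\<Omega> = "space M"
  note ch = chainsD[OF I0]
  define I' where "I' = (\<lambda>C. E \<inter> C) ` I0 \<union> (\<lambda>C. E \<union> (F \<inter> C)) ` I0 \<union> (\<lambda>C. F \<union> C) ` I0"
  have sub: "I' \<subseteq> sets M" unfolding I'_def using ch(2) EF by auto
  have FO: "F \<subseteq> ?\<Omega>" "E \<subseteq> ?\<Omega>" using EF sets.sets_into_space by auto
  have chn: "X \<subseteq> Y \<or> Y \<subseteq> X" if XY: "X \<in> I'" "Y \<in> I'" for X Y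
  proof -
    obtain C where C: "C \<in> I0" "X = E \<inter> C \<or> X = E \<union> (F \<inter> C) \<or> X = F \<union> C" using XY(1) unfolding I'_def by blast
    obtain C' where C': "C' \<in> I0" "Y = E \<inter> C' \<or> Y = E \<union> (F \<inter> C') \<or> Y = F \<union> C'" using XY(2) unfolding I'_def by blast
    have "C \<subseteq> C' \<or> C' \<subseteq> C" using ch(1) C(1) C'(1) unfolding ischain_def by blast
    then show ?thesis using C(2) C'(2) EF(3) by blast
  qed
  have inI: "E \<inter> C \<in> I'" "E \<union> (F \<inter> C) \<in> I'" "F \<union> C \<in> I'" if "C \<in> I0" for C
    using that unfolding I'_def by blast+
  have E: "E \<in> I'" using inI(1)[OF ch(5)] FO by (simp add: Int_absorb2)
  have F: "F \<in> I'" using inI(2)[OF ch(5)] FO EF(3) by (simp add: Int_absorb2 Un_absorb1)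
  have e: "{} \<in> I'" using inI(1)[OF ch(4)] by simp
  have O: "?\<Omega> \<in> I'" using inI(3)[OF ch(5)] FO by (simp add: Un_absorb1)
  have "sigma_sets ?\<Omega> I' = sets M"
  proof
    show "sigma_sets ?\<Omega> I' \<subseteq> sets M" using sets.sigma_sets_subset[OF sub] .
    have "I0 \<subseteq> sigma_sets ?\<Omega> I'"
    proof
      fix C assume C: "C \<in> I0"
      interpret sa: sigma_algebra ?\<Omega> "sigma_sets ?\<Omega> I'"
        using sub sets.sets_into_space by (intro sigma_algebra_sigma_sets) auto
      have "C = (E \<inter> C) \<union> ((E \<union> (F \<inter> C)) - E) \<union> ((F \<union> C) - F)"
        using C ch(3) EF(3) by blast
      moreover have "(E \<inter> C) \<union> ((E \<union> (F \<inter> C)) - E) \<union> ((F \<union> C) - F) \<in> sigma_sets ?\<Omega> I'"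
      proof -
        have a: "E \<inter> C \<in> sigma_sets ?\<Omega> I'" using inI(1)[OF C] by auto
        have b: "(E \<union> (F \<inter> C)) - E \<in> sigma_sets ?\<Omega> I'"
          by (rule sa.Diff) (use inI(2)[OF C] E in auto)
        have c: "(F \<union> C) - F \<in> sigma_sets ?\<Omega> I'"
          by (rule sa.Diff) (use inI(3)[OF C] F in auto)
        show ?thesis by (rule sa.Un[OF sa.Un[OF a b] c])
      qed
      ultimately show "C \<in> sigma_sets ?\<Omega> I'" by simp
    qed
    then show "sets M \<subseteq> sigma_sets ?\<Omega> I'" using sigma_sets_mono ch(6) by metis
  qed
  then have "I' \<in> chains_Sigma M" unfolding chains_Sigma_def using sub chn e O by blast
  then show ?thesis using E F inI(1) by blast
qed

lemma mu_diff:
  assumes I: "I \<in> chains_Sigma M" and mono: "nondecreasing_sf M v" and cont: "continuous_sf M v"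
    and "C \<in> I" "D \<in> I" "D \<subseteq> C"
  shows "measure (extremal_measure M v I) (C \<inter> (space M - D)) = v C - v D"
  using extremal(3)[OF I mono cont dset_gen(1)[OF I assms(4-6)]] dset_gen(2)[OF I assms(4-6)] by simp

lemma mu_in:
  assumes I: "I \<in> chains_Sigma M" and mono: "nondecreasing_sf M v" and cont: "continuous_sf M v"
    and v0: "v {} = 0" and X: "X \<in> I"
  shows "measure (extremal_measure M v I) X = v X"
proof -
  have "X \<subseteq> space M" using chainsD(3)[OF I] X by auto
  then have "X \<inter> (space M - {}) = X" by auto
  then show ?thesis using mu_diff[OF I mono cont X chainsD(4)[OF I]] v0 by simp
qed

lemma core_lb:
  assumes I: "I \<in> chains_Sigma M" and mono: "nondecreasing_sf M v" and cont: "continuous_sf M v"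
    and v0: "v {} = 0" and sm: "supermodular_sf M v" and B: "B \<in> sets M"
  shows "v B \<le> measure (extremal_measure M v I) B"
proof -
  let ?\<Omega> = "space M"
  let ?S = "dset ?\<Omega> I"
  note ch = chainsD[OF I]
  obtain I' where I': "I' \<in> chains_Sigma M" "B \<in> I'" "\<forall>C\<in>I. B \<inter> C \<in> I'"
    using chain_ext[OF I B B] by blast
  note ch' = chainsD[OF I'(1)]
  define \<mu> where "\<mu> = extremal_measure M v I"
  define \<kappa> where "\<kappa> = extremal_measure M v I'"
  interpret mu: finite_measure \<mu> unfolding \<mu>_def by (rule extremal(2)[OF I mono cont])
  interpret ka: finite_measure \<kappa> unfolding \<kappa>_def by (rule extremal(2)[OF I'(1) mono cont])
  have smu: "sets \<mu> = sets M" unfolding \<mu>_def by (rule extremal(1)[OF I mono cont])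
  have ska: "sets \<kappa> = sets M" unfolding \<kappa>_def by (rule extremal(1)[OF I'(1) mono cont])
  have spmu: "space \<mu> = ?\<Omega>" using sets_eq_imp_space_eq[OF smu] .
  have spka: "space \<kappa> = ?\<Omega>" using sets_eq_imp_space_eq[OF ska] .
  have sr: "semiring_of_sets ?\<Omega> ?S" using dset_semiring[OF ch(1,3,4)] .
  have sig: "sigma_sets ?\<Omega> ?S = sets M" using dset_sigma[OF ch(3,4)] ch(6) by simp
  have SsM: "?S \<subseteq> sets M" using sig sigma_sets_superset_generator by blast
  have mono': "\<forall>A\<in>sets M. \<forall>B\<in>sets M. A \<subseteq> B \<longrightarrow> v A \<le> v B"
    using mono unfolding nondecreasing_sf_def .
  have sm': "\<forall>A\<in>sets M. \<forall>B\<in>sets M. v A + v B \<le> v (A \<union> B) + v (A \<inter> B)"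
    using sm unfolding supermodular_sf_def .
  define f where "f X = measure \<mu> X - measure \<kappa> (X \<inter> B)" for X
  have fpos: "0 \<le> f X" if X: "X \<in> ?S" for X
  proof -
    obtain C D where cd: "X = C \<inter> (?\<Omega> - D)" "C \<in> I" "D \<in> I" "D \<subseteq> C"
      using X unfolding dset_def by blast
    have m1: "measure \<mu> X = v C - v D" unfolding cd(1) \<mu>_def by (rule mu_diff[OF I mono cont cd(2-4)])
    have BC: "B \<inter> C \<in> I'" "B \<inter> D \<in> I'" "B \<inter> D \<subseteq> B \<inter> C" using I'(3) cd by auto
    have "X \<inter> B = (B \<inter> C) \<inter> (?\<Omega> - B \<inter> D)" unfolding cd(1) by blast
    then have m2: "measure \<kappa> (X \<inter> B) = v (B \<inter> C) - v (B \<inter> D)"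
      unfolding \<kappa>_def using mu_diff[OF I'(1) mono cont BC] by simp
    have CD: "C \<in> sets M" "D \<in> sets M" using cd(2,3) ch(2) by auto
    have BCs: "B \<inter> C \<in> sets M" using CD B by auto
    have "v D + v (B \<inter> C) \<le> v (D \<union> (B \<inter> C)) + v (D \<inter> (B \<inter> C))"
      using sm' CD BCs by blast
    moreover have "D \<inter> (B \<inter> C) = B \<inter> D" using cd(4) by blast
    ultimately have h1: "v D + v (B \<inter> C) \<le> v (D \<union> (B \<inter> C)) + v (B \<inter> D)" by simp
    moreover have "v (D \<union> (B \<inter> C)) \<le> v C"
      using mono' CD BCs cd(4) by (metis Int_lower2 le_infI2 sets.Un sup.boundedI)
    ultimately show ?thesis unfolding f_def m1 m2 by linarith
  qed
  have OmS: "?\<Omega> \<in> ?S" unfolding dset_def using ch(4,5) by blast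
  obtain N where N: "sets N = sigma_sets ?\<Omega> ?S" "space N = ?\<Omega>" "finite_measure N"
    "\<forall>s\<in>?S. measure N s = f s"
  proof (rule exE[OF cara_real[of ?\<Omega> ?S f]])
    show "semiring_of_sets ?\<Omega> ?S" by (rule sr)
    show "f {} = 0" unfolding f_def by simp
    show "\<And>s. s \<in> ?S \<Longrightarrow> 0 \<le> f s" by (rule fpos)
    show "?\<Omega> \<in> ?S" by (rule OmS)
    fix F :: "nat \<Rightarrow> 'a set" assume F: "range F \<subseteq> ?S" "disjoint_family F" "(\<Union>n. F n) \<in> ?S"
    have s1: "(\<lambda>n. measure \<mu> (F n)) sums measure \<mu> (\<Union>n. F n)"
      by (rule measure_UNION) (use F SsM smu in \<open>auto simp: mu.emeasure_eq_measure\<close>)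
    have dj: "disjoint_family (\<lambda>n. F n \<inter> B)" using F(2) unfolding disjoint_family_on_def by blast
    have s2: "(\<lambda>n. measure \<kappa> (F n \<inter> B)) sums measure \<kappa> (\<Union>n. F n \<inter> B)"
      by (rule measure_UNION) (use F SsM ska B dj in \<open>auto simp: ka.emeasure_eq_measure\<close>)
    have "(\<Union>n. F n \<inter> B) = (\<Union>n. F n) \<inter> B" by blast
    then show "(\<lambda>n. f (F n)) sums f (\<Union>n. F n)" unfolding f_def using sums_diff[OF s1 s2] by simp
  qed auto
  interpret N: finite_measure N by fact
  have sN: "sets N = sets M" using N(1) sig by simp
  have key: "measure N X + measure \<kappa> (X \<inter> B) = measure \<mu> X" if X: "X \<in> sets M" for X
  proof -
    have Xs: "X \<in> sigma_sets ?\<Omega> ?S" using X sig by simp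
    have IS: "Int_stable ?S" unfolding Int_stable_def using semiring_of_sets.Int[OF sr] by blast
    have SP: "?S \<subseteq> Pow ?\<Omega>" using semiring_of_sets.axioms(1)[OF sr] by (simp add: subset_class_def)
    have PO: "measure N ?\<Omega> + measure \<kappa> (?\<Omega> \<inter> B) = measure \<mu> ?\<Omega>"
      using N(4) OmS unfolding f_def by simp
    from IS SP Xs show ?thesis
    proof (induction rule: sigma_sets_induct_disjoint)
      case (basic A)
      then show ?case using N(4) unfolding f_def by simp
    next
      case empty
      then show ?case by simp
    next
      case (compl A)
      have As: "A \<in> sets M" using compl(1) sig by simp
      have Asub: "A \<subseteq> ?\<Omega>" using As sets.sets_into_space by auto
      have "measure N (?\<Omega> - A) = measure N ?\<Omega> - measure N A"
        using N.finite_measure_Diff[of "?\<Omega>" A] sN As Asub by simp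
      moreover have "measure \<mu> (?\<Omega> - A) = measure \<mu> ?\<Omega> - measure \<mu> A"
        using mu.finite_measure_Diff[of "?\<Omega>" A] smu As Asub by simp
      moreover have "(?\<Omega> - A) \<inter> B = (?\<Omega> \<inter> B) - (A \<inter> B)" by blast
      moreover have "measure \<kappa> ((?\<Omega> \<inter> B) - (A \<inter> B)) = measure \<kappa> (?\<Omega> \<inter> B) - measure \<kappa> (A \<inter> B)"
        using ka.finite_measure_Diff[of "?\<Omega> \<inter> B" "A \<inter> B"] ska As Asub B by auto
      ultimately show ?case using compl(2) PO by simp
    next
      case (union A)
      have As: "range A \<subseteq> sets M" using union(2) sig by simp
      have s1: "(\<lambda>n. measure N (A n)) sums measure N (\<Union>n. A n)"
        by (rule measure_UNION) (use union(1) As sN in \<open>auto simp: N.emeasure_eq_measure\<close>)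
      have s3: "(\<lambda>n. measure \<mu> (A n)) sums measure \<mu> (\<Union>n. A n)"
        by (rule measure_UNION) (use union(1) As smu in \<open>auto simp: mu.emeasure_eq_measure\<close>)
      have dj: "disjoint_family (\<lambda>n. A n \<inter> B)" using union(1) unfolding disjoint_family_on_def by blast
      have s2: "(\<lambda>n. measure \<kappa> (A n \<inter> B)) sums measure \<kappa> (\<Union>n. A n \<inter> B)"
        by (rule measure_UNION) (use As ska B dj in \<open>auto simp: ka.emeasure_eq_measure\<close>)
      have "(\<Union>n. A n \<inter> B) = (\<Union>n. A n) \<inter> B" by blast
      then have s2': "(\<lambda>n. measure \<kappa> (A n \<inter> B)) sums measure \<kappa> ((\<Union>n. A n) \<inter> B)" using s2 by simp
      have "(\<lambda>n. measure N (A n) + measure \<kappa> (A n \<inter> B)) sums (measure N (\<Union>n. A n) + measure \<kappa> ((\<Union>n. A n) \<inter> B))"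
        by (rule sums_add[OF s1 s2'])
      moreover have "(\<lambda>n. measure N (A n) + measure \<kappa> (A n \<inter> B)) = (\<lambda>n. measure \<mu> (A n))"
        using union(3) by simp
      ultimately show ?case using s3 sums_unique2 by metis
    qed
  qed
  have "measure \<kappa> B = v B" unfolding \<kappa>_def by (rule mu_in[OF I'(1) mono cont v0 I'(2)])
  moreover have "0 \<le> measure N B" by simp
  moreover have "measure N B + measure \<kappa> B = measure \<mu> B" using key[OF B] by simp
  ultimately have "v B \<le> measure \<mu> B" by linarith
  then show ?thesis unfolding \<mu>_def .
qed

lemma Un_Int_meas:
  assumes "finite_measure N" "A \<in> sets N" "B \<in> sets N"
  shows "measure N (A \<union> B) + measure N (A \<inter> B) = measure N A + measure N B"
proof -
  interpret finite_measure N by fact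
  have "measure N (A \<union> B) = measure N A + measure N (B - A)" using finite_measure_Union' assms by blast
  moreover have "measure N (B - A) = measure N B - measure N (B \<inter> A)" using finite_measure_Diff' assms by blast
  ultimately show ?thesis by (simp add: Int_commute)
qed

lemma b_to_a:
  assumes I0: "I0 \<in> chains_Sigma M" and mono: "nondecreasing_sf M v" and cont: "continuous_sf M v"
    and v0: "v {} = 0"
    and H: "\<forall>I\<in>chains_Sigma M. \<forall>B\<in>sets M. v B \<le> measure (extremal_measure M v I) B"
  shows "supermodular_sf M v"
  unfolding supermodular_sf_def
proof (intro ballI)
  fix A B assume AB: "A \<in> sets M" "B \<in> sets M"
  obtain I' where I': "I' \<in> chains_Sigma M" "A \<inter> B \<in> I'" "A \<union> B \<in> I'"
    using chain_ext[OF I0, of "A \<inter> B" "A \<union> B"] AB by blast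
  define \<mu> where "\<mu> = extremal_measure M v I'"
  have fin: "finite_measure \<mu>" unfolding \<mu>_def by (rule extremal(2)[OF I'(1) mono cont])
  have smu: "sets \<mu> = sets M" unfolding \<mu>_def by (rule extremal(1)[OF I'(1) mono cont])
  have "measure \<mu> (A \<union> B) + measure \<mu> (A \<inter> B) = measure \<mu> A + measure \<mu> B"
    by (rule Un_Int_meas[OF fin]) (use AB smu in auto)
  moreover have "measure \<mu> (A \<union> B) = v (A \<union> B)" "measure \<mu> (A \<inter> B) = v (A \<inter> B)"
    unfolding \<mu>_def using mu_in[OF I'(1) mono cont v0] I'(2,3) by auto
  moreover have "v A \<le> measure \<mu> A" "v B \<le> measure \<mu> B" using H I'(1) AB unfolding \<mu>_def by auto
  ultimately show "v A + v B \<le> v (A \<union> B) + v (A \<inter> B)" by linarith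
qed

theorem corollary8:
  fixes M :: "'a measure" and v :: "'a set \<Rightarrow> real"
  assumes "chains_Sigma M \<noteq> {}"
    and "nondecreasing_sf M v"
    and "continuous_sf M v"
    and "v {} = 0"
  shows "(supermodular_sf M v
          \<longleftrightarrow> (\<forall>I\<in>chains_Sigma M. extremal_measure M v I \<in> core_plus M v (space M)))
       \<and> (supermodular_sf M v
          \<longleftrightarrow> (\<forall>A\<in>sets M. ereal (v A) = (INF I\<in>chains_Sigma M. ereal (measure (extremal_measure M v I) A))))
       \<and> (supermodular_sf M v
          \<longleftrightarrow> (\<forall>A\<in>sets M. \<forall>B\<in>sets M. B \<subseteq> A \<longrightarrow>
                ereal (v B) = (INF N\<in>core_plus M v A. ereal (measure N B))))"
proof -
  note mono = assms(2) and cont = assms(3) and v0 = assms(4)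
  obtain I0 where I0: "I0 \<in> chains_Sigma M" using assms(1) by blast
  let ?b = "\<forall>I\<in>chains_Sigma M. \<forall>B\<in>sets M. v B \<le> measure (extremal_measure M v I) B"
  have ab: "?b" if "supermodular_sf M v" using core_lb[OF _ mono cont v0 that] by blast
  have ba: "supermodular_sf M v" if "?b" by (rule b_to_a[OF I0 mono cont v0 that])
  have spr: "sets (restrict_space M (space M)) = sets M"
    using sets_restrict_space_iff[of "space M" M] sets.sets_into_space by auto
  have P1: "supermodular_sf M v \<longleftrightarrow> (\<forall>I\<in>chains_Sigma M. extremal_measure M v I \<in> core_plus M v (space M))"
  proof
    assume sm: "supermodular_sf M v"
    show "\<forall>I\<in>chains_Sigma M. extremal_measure M v I \<in> core_plus M v (space M)"
    proof
      fix I assume I: "I \<in> chains_Sigma M"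
      show "extremal_measure M v I \<in> core_plus M v (space M)"
        unfolding core_plus_def using extremal(1,2)[OF I mono cont] spr
          mu_in[OF I mono cont v0 chainsD(5)[OF I]] ab[OF sm] I by auto
    qed
  next
    assume H: "\<forall>I\<in>chains_Sigma M. extremal_measure M v I \<in> core_plus M v (space M)"
    have "?b"
    proof (intro ballI)
      fix I B assume "I \<in> chains_Sigma M" "B \<in> sets M"
      then show "v B \<le> measure (extremal_measure M v I) B"
        using H sets.sets_into_space unfolding core_plus_def by blast
    qed
    then show "supermodular_sf M v" by (rule ba)
  qed
  have P2: "supermodular_sf M v \<longleftrightarrow> (\<forall>A\<in>sets M. ereal (v A) = (INF I\<in>chains_Sigma M. ereal (measure (extremal_measure M v I) A)))"
  proof
    assume sm: "supermodular_sf M v"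
    show "\<forall>A\<in>sets M. ereal (v A) = (INF I\<in>chains_Sigma M. ereal (measure (extremal_measure M v I) A))"
    proof
      fix A assume A: "A \<in> sets M"
      obtain I' where I': "I' \<in> chains_Sigma M" "A \<in> I'" using chain_ext[OF I0 A A] by blast
      have "(INF I\<in>chains_Sigma M. ereal (measure (extremal_measure M v I) A)) \<le> ereal (measure (extremal_measure M v I') A)"
        using I'(1) by (rule INF_lower)
      also have "\<dots> = ereal (v A)" using mu_in[OF I'(1) mono cont v0 I'(2)] by simp
      finally have le: "(INF I\<in>chains_Sigma M. ereal (measure (extremal_measure M v I) A)) \<le> ereal (v A)" .
      have "ereal (v A) \<le> (INF I\<in>chains_Sigma M. ereal (measure (extremal_measure M v I) A))"
        using ab[OF sm] A by (auto intro!: INF_greatest)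
      then show "ereal (v A) = (INF I\<in>chains_Sigma M. ereal (measure (extremal_measure M v I) A))"
        using le by (rule antisym)
    qed
  next
    assume H: "\<forall>A\<in>sets M. ereal (v A) = (INF I\<in>chains_Sigma M. ereal (measure (extremal_measure M v I) A))"
    have "?b"
    proof (intro ballI)
      fix I B assume I: "I \<in> chains_Sigma M" and B: "B \<in> sets M"
      have "ereal (v B) \<le> ereal (measure (extremal_measure M v I) B)"
        using H B INF_lower[OF I, of "\<lambda>I. ereal (measure (extremal_measure M v I) B)"] by simp
      then show "v B \<le> measure (extremal_measure M v I) B" by simp
    qed
    then show "supermodular_sf M v" by (rule ba)
  qed
  have P3: "supermodular_sf M v \<longleftrightarrow> (\<forall>A\<in>sets M. \<forall>B\<in>sets M. B \<subseteq> A \<longrightarrow>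
                ereal (v B) = (INF N\<in>core_plus M v A. ereal (measure N B)))"
  proof
    assume sm: "supermodular_sf M v"
    show "\<forall>A\<in>sets M. \<forall>B\<in>sets M. B \<subseteq> A \<longrightarrow> ereal (v B) = (INF N\<in>core_plus M v A. ereal (measure N B))"
    proof (intro ballI impI)
      fix A B assume A: "A \<in> sets M" and B: "B \<in> sets M" and BA: "B \<subseteq> A"
      have ge: "ereal (v B) \<le> (INF N\<in>core_plus M v A. ereal (measure N B))"
        using B BA by (auto intro!: INF_greatest simp: core_plus_def)
      obtain I' where I': "I' \<in> chains_Sigma M" "B \<in> I'" "A \<in> I'" using chain_ext[OF I0 B A BA] by blast
      define \<mu> where "\<mu> = extremal_measure M v I'"
      have fin: "finite_measure \<mu>" unfolding \<mu>_def by (rule extremal(2)[OF I'(1) mono cont])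
      have smu: "sets \<mu> = sets M" unfolding \<mu>_def by (rule extremal(1)[OF I'(1) mono cont])
      have spmu: "space \<mu> = space M" using sets_eq_imp_space_eq[OF smu] .
      define N where "N = restrict_space \<mu> A"
      have Asp: "A \<inter> space \<mu> \<in> sets \<mu>" using A smu spmu sets.sets_into_space by (simp add: Int_absorb2)
      have mN: "measure N X = measure \<mu> X" if "X \<subseteq> A" for X
        unfolding N_def by (rule measure_restrict_space[OF Asp that])
      have "N \<in> core_plus M v A"
        unfolding core_plus_def
      proof (intro CollectI conjI ballI impI)
        show "sets N = sets (restrict_space M A)" unfolding N_def sets_restrict_space smu ..
        show "finite_measure N" unfolding N_def using finite_measure_restrict_space[OF fin] A smu by simp
        show "measure N A = v A" using mN[of A] mu_in[OF I'(1) mono cont v0 I'(3)] unfolding \<mu>_def by simp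
        fix B' assume "B' \<in> sets M" "B' \<subseteq> A"
        then show "v B' \<le> measure N B'" using mN[of B'] core_lb[OF I'(1) mono cont v0 sm] unfolding \<mu>_def by simp
      qed
      then have "(INF N\<in>core_plus M v A. ereal (measure N B)) \<le> ereal (measure N B)" by (rule INF_lower)
      also have "\<dots> = ereal (v B)" using mN[OF BA] mu_in[OF I'(1) mono cont v0 I'(2)] unfolding \<mu>_def by simp
      finally show "ereal (v B) = (INF N\<in>core_plus M v A. ereal (measure N B))" using ge by (rule antisym[rotated])
    qed
  next
    assume H: "\<forall>A\<in>sets M. \<forall>B\<in>sets M. B \<subseteq> A \<longrightarrow> ereal (v B) = (INF N\<in>core_plus M v A. ereal (measure N B))"
    show "supermodular_sf M v"
      unfolding supermodular_sf_def
    proof (intro ballI)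
      fix A B assume A: "A \<in> sets M" and B: "B \<in> sets M"
      let ?U = "A \<union> B"
      have U: "?U \<in> sets M" using A B by auto
      have Usp: "?U \<inter> space M \<in> sets M" using U sets.sets_into_space by (simp add: Int_absorb2)
      have "ereal (v A + v B - v ?U) \<le> (INF N\<in>core_plus M v ?U. ereal (measure N (A \<inter> B)))"
      proof (rule INF_greatest)
        fix N assume N: "N \<in> core_plus M v ?U"
        have sN: "sets N = sets (restrict_space M ?U)" and fin: "finite_measure N"
          and NU: "measure N ?U = v ?U" and lb: "\<forall>B'\<in>sets M. B' \<subseteq> ?U \<longrightarrow> v B' \<le> measure N B'"
          using N unfolding core_plus_def by auto
        have AN: "A \<in> sets N" "B \<in> sets N" using sN sets_restrict_space_iff[OF Usp] A B by auto
        have "measure N (A \<union> B) + measure N (A \<inter> B) = measure N A + measure N B"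
          by (rule Un_Int_meas[OF fin AN])
        moreover have "v A \<le> measure N A" "v B \<le> measure N B" using lb A B by auto
        ultimately show "ereal (v A + v B - v ?U) \<le> ereal (measure N (A \<inter> B))" using NU by simp
      qed
      also have "\<dots> = ereal (v (A \<inter> B))"
      proof -
        have AB: "A \<inter> B \<in> sets M" "A \<inter> B \<subseteq> ?U" using A B by auto
        have "ereal (v (A \<inter> B)) = (INF N\<in>core_plus M v ?U. ereal (measure N (A \<inter> B)))"
          using H U AB by blast
        then show ?thesis by simp
      qed
      finally show "v A + v B \<le> v (A \<union> B) + v (A \<inter> B)" by simp
    qed
  qed
  show ?thesis using P1 P2 P3 by blast
qed

end
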